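(* For $\tilde w\in\widetilde W$, $\Phi(G(\tilde w))=\varnothing$ if and only if $\tilde w\in\Omega$, in which case $G(\tilde w)=T$.
   Context: $k$ a finite field, $G=\mathrm{GL}_n$, $T$ the diagonal torus, $B$/$B^-$ the upper/lower triangular Borel. $I\subset\mathrm{GL}_n(k[[s]])$ is the preimage of $B$ under $s\mapsto0$; $I^-=\{g\in\mathrm{GL}_n(k[s^{-1}]):g|_{s^{-1}=0}\in B^-\}$. $\widetilde W$ is the group of monomial matrices $w\,\mathrm{diag}(s^{\lambda_1},\dots,s^{\lambda_n})$ with $w$ a permutation matrix and $\lambda\in\mathbb Z^n$; $\Omega=\{\tilde w\in\widetilde W:\tilde wI\tilde w^{-1}=I\}$. For $\tilde w\in\widetilde W$, $S(\tilde w)=I^-\cap\tilde wI\tilde w^{-1}$, and $G(\tilde w)=\mathrm{ev}_1(S(\tilde w))\subset\mathrm{GL}_n(k)$, where $\mathrm{ev}_1$ is evaluation at $s=1$. For a subgroup $H\subseteq\mathrm{GL}_n$, $\Phi(H)$ is the set of roots $\alpha$ of $\mathrm{GL}_n$ whose root subgroup $U_\alpha$ is contained in $H$. *)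

theory Defs
  imports "HOL-Computational_Algebra.Formal_Laurent_Series" "Jordan_Normal_Form.Matrix"
begin

(* Entries live in the field k((s)) of formal Laurent series, type 'k fls.
   Matrices are Jordan_Normal_Form matrices of dimension n x n, indices 0..<n. *)

definition is_power_series :: "'k::zero fls \<Rightarrow> bool" where
  "is_power_series f \<longleftrightarrow> (\<forall>i<0. fls_nth f i = 0)"

definition is_poly_sinv :: "'k::zero fls \<Rightarrow> bool" where
  "is_poly_sinv f \<longleftrightarrow> (\<forall>i>0. fls_nth f i = 0) \<and> finite {i. fls_nth f i \<noteq> 0}"

definition entries_in :: "nat \<Rightarrow> ('a \<Rightarrow> bool) \<Rightarrow> 'a mat \<Rightarrow> bool" where
  "entries_in n P A \<longleftrightarrow> (\<forall>i<n. \<forall>j<n. P (index_mat A (i,j)))"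

(* GL_n(R) for a subring R of a ring, R given by its membership predicate *)
definition GLn :: "nat \<Rightarrow> ('a::comm_ring_1 \<Rightarrow> bool) \<Rightarrow> 'a mat set" where
  "GLn n P = {A \<in> carrier_mat n n. entries_in n P A \<and>
      (\<exists>B \<in> carrier_mat n n. entries_in n P B \<and> A * B = 1\<^sub>m n \<and> B * A = 1\<^sub>m n)}"

(* Iwahori subgroup I: preimage of upper triangular B under s \<mapsto> 0 *)
definition Iwahori :: "nat \<Rightarrow> 'k::field fls mat set" where
  "Iwahori n = {g \<in> GLn n is_power_series.
      \<forall>i<n. \<forall>j<n. j < i \<longrightarrow> fls_nth (index_mat g (i,j)) 0 = 0}"

(* I^- : g in GL_n(k[s^{-1}]) with g|_{s^{-1}=0} lower triangular *)
definition Iwahori_minus :: "nat \<Rightarrow> 'k::field fls mat set" where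
  "Iwahori_minus n = {g \<in> GLn n is_poly_sinv.
      \<forall>i<n. \<forall>j<n. i < j \<longrightarrow> fls_nth (index_mat g (i,j)) 0 = 0}"

(* the monomial matrix w diag(s^{lambda_1},...,s^{lambda_n}), w the permutation matrix
   of sigma (w e_j = e_{sigma j}) *)
definition mono_mat :: "nat \<Rightarrow> (nat \<Rightarrow> nat) \<Rightarrow> (nat \<Rightarrow> int) \<Rightarrow> 'k::field fls mat" where
  "mono_mat n \<sigma> lam = mat n n (\<lambda>(i,j). if i = \<sigma> j then fls_X_intpow (lam j) else 0)"

definition affW :: "nat \<Rightarrow> 'k::field fls mat set" where
  "affW n = {mono_mat n \<sigma> lam | \<sigma> lam. \<sigma> permutes {0..<n}}"

definition mat_inv :: "nat \<Rightarrow> 'a::comm_ring_1 mat \<Rightarrow> 'a mat" where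
  "mat_inv n A = (THE B. B \<in> carrier_mat n n \<and> A * B = 1\<^sub>m n \<and> B * A = 1\<^sub>m n)"

definition conj_set :: "nat \<Rightarrow> 'a::comm_ring_1 mat \<Rightarrow> 'a mat set \<Rightarrow> 'a mat set" where
  "conj_set n w H = (\<lambda>g. w * g * mat_inv n w) ` H"

definition Omega :: "nat \<Rightarrow> 'k::field fls mat set" where
  "Omega n = {w \<in> affW n. conj_set n w (Iwahori n) = Iwahori n}"

definition S_set :: "nat \<Rightarrow> 'k::field fls mat \<Rightarrow> 'k fls mat set" where
  "S_set n w = Iwahori_minus n \<inter> conj_set n w (Iwahori n)"

(* evaluation at s = 1 of a Laurent polynomial *)
definition ev1 :: "'k::comm_ring_1 fls \<Rightarrow> 'k" where
  "ev1 f = (\<Sum>i\<in>{i. fls_nth f i \<noteq> 0}. fls_nth f i)"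

definition ev1_mat :: "'k::comm_ring_1 fls mat \<Rightarrow> 'k mat" where
  "ev1_mat A = map_mat ev1 A"

definition G_set :: "nat \<Rightarrow> 'k::field fls mat \<Rightarrow> 'k mat set" where
  "G_set n w = ev1_mat ` S_set n w"

definition root_subgroup :: "nat \<Rightarrow> nat \<times> nat \<Rightarrow> 'k::field mat set" where
  "root_subgroup n \<alpha> = {1\<^sub>m n + mat n n (\<lambda>(a,b). if (a,b) = \<alpha> then t else 0) | t. True}"

definition roots :: "nat \<Rightarrow> (nat \<times> nat) set" where
  "roots n = {(i,j). i < n \<and> j < n \<and> i \<noteq> j}"

definition Phi :: "nat \<Rightarrow> 'k::field mat set \<Rightarrow> (nat \<times> nat) set" where
  "Phi n H = {\<alpha> \<in> roots n. root_subgroup n \<alpha> \<subseteq> H}"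

definition torus :: "nat \<Rightarrow> 'k::field mat set" where
  "torus n = {A \<in> carrier_mat n n. diagonal_mat A \<and> (\<forall>i<n. index_mat A (i,i) \<noteq> 0)}"

end

theory Submission
  imports Defs
begin

lemma mono_index: "i<n \<Longrightarrow> j<n \<Longrightarrow> mono_mat n \<sigma> lam $$ (i,j) = (if i = \<sigma> j then fls_X_intpow (lam j) else 0)"
  by (simp add: mono_mat_def)

lemma mono_carrier[simp]: "mono_mat n \<sigma> lam \<in> carrier_mat n n"
  by (simp add: mono_mat_def)
lemma mono_dim[simp]: "dim_row (mono_mat n \<sigma> lam) = n" "dim_col (mono_mat n \<sigma> lam) = n"
  by (simp_all add: mono_mat_def)

lemma mono_left:
  assumes p: "\<sigma> permutes {0..<n}" and g: "g \<in> carrier_mat n m" and i: "i<n" and c: "c<m"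
  shows "(mono_mat n \<sigma> lam * g) $$ (\<sigma> i, c) = fls_X_intpow (lam i) * g$$(i,c)"
proof -
  have si: "\<sigma> i < n" using p i by (simp add: permutes_in_image)
  have inj: "\<And>k. (\<sigma> i = \<sigma> k) = (i = k)" using p by (metis permutes_inj injD)
  have "(mono_mat n \<sigma> lam * g) $$ (\<sigma> i, c) = (\<Sum>k\<in>{0..<n}. (if i = k then fls_X_intpow (lam k) else 0) * g$$(k,c))"
    using si g c by (simp add: index_mult_mat scalar_prod_def mono_index inj)
  also have "\<dots> = (\<Sum>k\<in>{0..<n}. if i = k then fls_X_intpow (lam k) * g$$(k,c) else 0)"
    by (rule sum.cong) auto
  also have "\<dots> = fls_X_intpow (lam i) * g$$(i,c)" using i by simp
  finally show ?thesis .
qed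

lemma mono_right:
  assumes p: "\<tau> permutes {0..<n}" and M: "M \<in> carrier_mat m n" and r: "r<m" and q: "q<n"
  shows "(M * mono_mat n \<tau> nu) $$ (r, q) = M$$(r,\<tau> q) * fls_X_intpow (nu q)"
proof -
  have tq: "\<tau> q < n" using p q by (simp add: permutes_in_image)
  have "(M * mono_mat n \<tau> nu) $$ (r, q) = (\<Sum>k\<in>{0..<n}. M$$(r,k) * (if k = \<tau> q then fls_X_intpow (nu q) else 0))"
    using r q M by (simp add: index_mult_mat scalar_prod_def mono_index)
  also have "\<dots> = (\<Sum>k\<in>{0..<n}. if k = \<tau> q then M$$(r,k) * fls_X_intpow (nu q) else 0)"
    by (rule sum.cong) auto
  also have "\<dots> = M$$(r,\<tau> q) * fls_X_intpow (nu q)" using tq by simp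
  finally show ?thesis .
qed

definition winv :: "nat \<Rightarrow> (nat \<Rightarrow> nat) \<Rightarrow> (nat \<Rightarrow> int) \<Rightarrow> 'k::field fls mat" where
  "winv n \<sigma> lam = mono_mat n (inv_into UNIV \<sigma>) (\<lambda>q. - lam (inv_into UNIV \<sigma> q))"

lemma conj_entry:
  assumes p: "\<sigma> permutes {0..<n}" and g: "g \<in> carrier_mat n n" and i: "i<n" and j: "j<n"
  shows "(mono_mat n \<sigma> lam * g * winv n \<sigma> lam) $$ (\<sigma> i, \<sigma> j)
     = fls_X_intpow (lam i) * g$$(i,j) * fls_X_intpow (- lam j)"
proof -
  have pi: "inv_into UNIV \<sigma> permutes {0..<n}" using p by (simp add: permutes_inv)
  have sj: "\<sigma> j < n" "\<sigma> i < n" using p i j by (simp_all add: permutes_in_image)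
  have ij: "inv_into UNIV \<sigma> (\<sigma> j) = j" using p by (simp add: permutes_inverses)
  have "(mono_mat n \<sigma> lam * g * winv n \<sigma> lam) $$ (\<sigma> i, \<sigma> j)
     = (mono_mat n \<sigma> lam * g) $$ (\<sigma> i, j) * fls_X_intpow (- lam j)"
  proof -
    have c: "mono_mat n \<sigma> lam * g \<in> carrier_mat n n" using mult_carrier_mat[OF mono_carrier g] .
    show ?thesis unfolding winv_def
      using mono_right[OF pi c sj(2) sj(1), of "\<lambda>q. - lam (inv_into UNIV \<sigma> q)"] ij by simp
  qed
  also have "\<dots> = fls_X_intpow (lam i) * g$$(i,j) * fls_X_intpow (- lam j)"
    using mono_left[OF p g i j] by simp
  finally show ?thesis .
qed

lemma winv_carrier[simp]: "winv n \<sigma> lam \<in> carrier_mat n n"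
  by (simp add: winv_def)
lemma winv_dim[simp]: "dim_row (winv n \<sigma> lam) = n" "dim_col (winv n \<sigma> lam) = n"
  by (simp_all add: winv_def)

lemma X_mult: "(fls_X_intpow a :: 'a::semiring_1 fls) * fls_X_intpow b = fls_X_intpow (a+b)"
  by (rule fls_X_intpow_times_fls_X_intpow)

lemma perm_surj_idx:
  fixes \<sigma> :: "nat \<Rightarrow> nat"
  assumes p: "\<sigma> permutes {0..<n}" and q: "q < n"
  obtains i where "i < n" "q = \<sigma> i"
proof -
  have "q \<in> {0..<n}" using q by simp
  then have "inv_into UNIV \<sigma> q \<in> {0..<n}" using permutes_in_image[OF permutes_inv[OF p], of q] by simp
  then have "inv_into UNIV \<sigma> q < n" by simp
  moreover have "q = \<sigma> (inv_into UNIV \<sigma> q)" using p by (simp add: permutes_inverses)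
  ultimately show ?thesis using that by blast
qed

lemma w_winv:
  assumes p: "\<sigma> permutes {0..<n}"
  shows "mono_mat n \<sigma> lam * winv n \<sigma> lam = (1\<^sub>m n :: 'k::field fls mat)"
proof -
  have inj: "\<And>i j. (\<sigma> i = \<sigma> j) = (i = j)" using p by (metis permutes_inj injD)
  have ent: "(mono_mat n \<sigma> lam * winv n \<sigma> lam) $$ (p', q) = (1\<^sub>m n :: 'k fls mat) $$ (p', q)"
    if pq: "p' < n" "q < n" for p' q
  proof -
    obtain i j where ij: "i<n" "j<n" "p' = \<sigma> i" "q = \<sigma> j" using perm_surj_idx[OF p] pq by metis
    have e: "(mono_mat n \<sigma> lam * winv n \<sigma> lam) $$ (p', q) = fls_X_intpow (lam i) * (1\<^sub>m n :: 'k fls mat) $$ (i,j) * fls_X_intpow (- lam j)"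
      using conj_entry[OF p one_carrier_mat ij(1,2), of lam] ij by simp
    show ?thesis
    proof (cases "i = j")
      case True
      then show ?thesis using e ij X_mult[of "lam j" "- lam j", where 'a='k] pq by simp
    next
      case False
      have "p' \<noteq> q" using False ij by (simp add: inj)
      then show ?thesis using e ij pq False by simp
    qed
  qed
  show ?thesis
  proof (rule eq_matI)
    fix i j assume "i < dim_row (1\<^sub>m n :: 'k fls mat)" "j < dim_col (1\<^sub>m n :: 'k fls mat)"
    then show "(mono_mat n \<sigma> lam * winv n \<sigma> lam) $$ (i, j) = (1\<^sub>m n :: 'k fls mat) $$ (i, j)"
      using ent by simp
  qed simp_all
qed

lemma winv_winv:
  assumes p: "\<sigma> permutes {0..<n}"
  shows "winv n (inv_into UNIV \<sigma>) (\<lambda>q. - lam (inv_into UNIV \<sigma> q)) = mono_mat n \<sigma> lam"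
proof -
  have "inv_into UNIV (inv_into UNIV \<sigma>) = \<sigma>" using p by (simp add: inv_inv_eq permutes_bij)
  moreover have "\<And>q. inv_into UNIV \<sigma> (\<sigma> q) = q" using p by (simp add: permutes_inverses)
  ultimately show ?thesis by (simp add: winv_def)
qed

lemma winv_w:
  assumes p: "\<sigma> permutes {0..<n}"
  shows "winv n \<sigma> lam * mono_mat n \<sigma> lam = (1\<^sub>m n :: 'k::field fls mat)"
proof -
  have pi: "inv_into UNIV \<sigma> permutes {0..<n}" using p by (simp add: permutes_inv)
  show ?thesis using w_winv[OF pi, of "\<lambda>q. - lam (inv_into UNIV \<sigma> q)"]
    unfolding winv_winv[OF p] by (simp add: winv_def)
qed

lemma mat_inv_mono:
  assumes p: "\<sigma> permutes {0..<n}"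
  shows "mat_inv n (mono_mat n \<sigma> lam) = (winv n \<sigma> lam :: 'k::field fls mat)"
  unfolding mat_inv_def
proof (rule the_equality)
  show "winv n \<sigma> lam \<in> carrier_mat n n \<and> mono_mat n \<sigma> lam * winv n \<sigma> lam = 1\<^sub>m n \<and> winv n \<sigma> lam * mono_mat n \<sigma> lam = (1\<^sub>m n :: 'k fls mat)"
    using w_winv[OF p, of lam] winv_w[OF p, of lam] winv_carrier by blast
next
  fix B :: "'k fls mat" assume B: "B \<in> carrier_mat n n \<and> mono_mat n \<sigma> lam * B = 1\<^sub>m n \<and> B * mono_mat n \<sigma> lam = 1\<^sub>m n"
  have Bc: "B \<in> carrier_mat n n" using B by blast
  have "B = 1\<^sub>m n * B" using Bc by (rule left_mult_one_mat[symmetric])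
  also have "\<dots> = (winv n \<sigma> lam * mono_mat n \<sigma> lam) * B" unfolding winv_w[OF p] ..
  also have "\<dots> = winv n \<sigma> lam * (mono_mat n \<sigma> lam * B)"
    using Bc by (simp add: assoc_mult_mat[of _ n n _ n _ n])
  also have "\<dots> = winv n \<sigma> lam" using B by simp
  finally show "B = winv n \<sigma> lam" .
qed

lemma shift1_mult: "(f::'k::field fls) * fls_shift k 1 = fls_shift k f" "fls_shift k 1 * f = fls_shift k f"
  using fls_X_intpow_times_conv_shift[where i="-k" and f=f] by simp_all

lemma X3: "(fls_X_intpow a :: 'k::field fls) * (fls_const t * fls_X_intpow m) * fls_X_intpow b = fls_const t * fls_X_intpow (a+m+b)"
  by (simp add: shift1_mult mult.assoc algebra_simps)

lemma X2: "(fls_X_intpow a :: 'k::field fls) * 1 * fls_X_intpow (-a) = 1"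
  by (simp add: fls_X_intpow_times_conv_shift)

lemma nth_cX: "fls_nth (fls_const t * fls_X_intpow e :: 'k::field fls) k = (if k = e then t else 0)"
  by (simp add: fls_X_intpow_times_conv_shift)

lemma ev1_cX: "ev1 (fls_const t * fls_X_intpow e :: 'k::field fls) = t"
proof (cases "t = 0")
  case True then show ?thesis by (simp add: ev1_def)
next
  case False
  then have "{i. fls_nth (fls_const t * fls_X_intpow e :: 'k fls) i \<noteq> 0} = {e}" by (auto simp: nth_cX)
  then show ?thesis by (simp add: ev1_def nth_cX)
qed

lemma ev1_0: "ev1 (0 :: 'k::field fls) = 0" by (simp add: ev1_def)
lemma ev1_1: "ev1 (1 :: 'k::field fls) = 1"
  using ev1_cX[of "1::'k" 0] by simp

definition Emat :: "nat \<Rightarrow> nat \<Rightarrow> nat \<Rightarrow> 'a::comm_ring_1 \<Rightarrow> 'a mat" where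
  "Emat n a b c = 1\<^sub>m n + mat n n (\<lambda>(p,q). if (p,q) = (a,b) then c else 0)"

lemma Emat_carrier[simp]: "Emat n a b c \<in> carrier_mat n n"
  and Emat_dim[simp]: "dim_row (Emat n a b c) = n" "dim_col (Emat n a b c) = n"
  by (simp_all add: Emat_def)

lemma Emat_index:
  assumes "a \<noteq> b" "p < n" "q < n"
  shows "Emat n a b c $$ (p,q) = (if p = q then 1 else if (p,q) = (a,b) then c else 0)"
  using assms by (auto simp: Emat_def)

lemma Emat_mult:
  assumes ab: "a \<noteq> b" and bn: "b < n"
  shows "Emat n a b c * Emat n a b d = Emat n a b (c + d)"
proof (rule eq_matI)
  fix p q assume pq: "p < dim_row (Emat n a b (c + d))" "q < dim_col (Emat n a b (c + d))"
  then have p: "p < n" and q: "q < n" by auto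
  have "(Emat n a b c * Emat n a b d) $$ (p,q) = (\<Sum>k\<in>{0..<n}. Emat n a b c $$ (p,k) * Emat n a b d $$ (k,q))"
    using p q by (simp add: index_mult_mat scalar_prod_def)
  also have "\<dots> = (\<Sum>k\<in>{0..<n}. (if k = p then Emat n a b d $$ (k,q) else 0) + (if k = b then (if p = a then c else 0) * Emat n a b d $$ (k,q) else 0))"
    by (rule sum.cong) (use ab p q in \<open>auto simp: Emat_index\<close>)
  also have "\<dots> = Emat n a b d $$ (p,q) + (if p = a then c else 0) * Emat n a b d $$ (b,q)"
    using p bn by (simp add: sum.distrib)
  also have "\<dots> = Emat n a b (c + d) $$ (p,q)"
    using ab p q bn by (auto simp: Emat_index)
  finally show "(Emat n a b c * Emat n a b d) $$ (p,q) = Emat n a b (c + d) $$ (p,q)" .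
qed simp_all

lemma Emat_0: "Emat n a b 0 = 1\<^sub>m n"
  by (rule eq_matI) (auto simp: Emat_def)

lemma Emat_inv:
  assumes ab: "a \<noteq> b" and bn: "b < n"
  shows "Emat n a b c * Emat n a b (-c) = 1\<^sub>m n" "Emat n a b (-c) * Emat n a b c = 1\<^sub>m n"
  using Emat_mult[OF ab bn, of c "-c"] Emat_mult[OF ab bn, of "-c" c] by (simp_all add: Emat_0)

lemma Emat_GLn:
  assumes ab: "a \<noteq> b" and bn: "b < n" and P: "P 0" "P 1" "P c" "P (-c)"
  shows "Emat n a b c \<in> GLn n P"
proof -
  have ent: "entries_in n P (Emat n a b x)" if "P x" for x
    unfolding entries_in_def using that P ab by (auto simp: Emat_index)
  show ?thesis unfolding GLn_def
    using ent[OF P(3)] ent[OF P(4)] Emat_inv[OF ab bn, of c] Emat_carrier[of n a b "-c"] Emat_carrier[of n a b c] by blast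
qed

lemma is_poly_sinv_cX: "e \<le> 0 \<Longrightarrow> is_poly_sinv (fls_const t * fls_X_intpow e :: 'k::field fls)"
  unfolding is_poly_sinv_def nth_cX by (auto intro: finite_subset[of _ "{e}"])

lemma is_power_series_cX: "e \<ge> 0 \<Longrightarrow> is_power_series (fls_const t * fls_X_intpow e :: 'k::field fls)"
  unfolding is_power_series_def nth_cX by auto

lemma is_poly_sinv_uminus: "is_poly_sinv f \<Longrightarrow> is_poly_sinv (- (f::'k::field fls))"
  unfolding is_poly_sinv_def by simp

lemma is_power_series_uminus: "is_power_series f \<Longrightarrow> is_power_series (- (f::'k::field fls))"
  unfolding is_power_series_def by simp

lemma is_poly_sinv_0: "is_poly_sinv (0::'k::field fls)"
  unfolding is_poly_sinv_def by simp
lemma is_power_series_0: "is_power_series (0::'k::field fls)"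
  unfolding is_power_series_def by simp
lemma one_cX: "(1::'k::field fls) = fls_const 1 * fls_X_intpow 0" by simp
lemma is_poly_sinv_1: "is_poly_sinv (1::'k::field fls)"
  by (subst one_cX) (rule is_poly_sinv_cX, simp)
lemma is_power_series_1: "is_power_series (1::'k::field fls)"
  by (subst one_cX) (rule is_power_series_cX, simp)

lemma perm_lt: "\<sigma> permutes {0..<n} \<Longrightarrow> i < n \<Longrightarrow> \<sigma> i < (n::nat)"
  by (simp add: permutes_in_image)

lemma perm_inj: "\<sigma> permutes {0..<n} \<Longrightarrow> (\<sigma> i = \<sigma> j) = (i = j)"
  by (metis permutes_inj injD)

lemma conj_eq_Emat:
  fixes \<sigma> :: "nat \<Rightarrow> nat" and lam :: "nat \<Rightarrow> int"
  assumes p: "\<sigma> permutes {0..<n}" and i: "i<n" and j: "j<n" and ij: "i\<noteq>j"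
  shows "mono_mat n \<sigma> lam * Emat n i j (fls_const t * fls_X_intpow (e - lam i + lam j)) * winv n \<sigma> lam
     = (Emat n (\<sigma> i) (\<sigma> j) (fls_const t * fls_X_intpow e) :: 'k::field fls mat)"
proof (rule eq_matI)
  fix p' q assume "p' < dim_row (Emat n (\<sigma> i) (\<sigma> j) (fls_const t * fls_X_intpow e) :: 'k fls mat)"
    "q < dim_col (Emat n (\<sigma> i) (\<sigma> j) (fls_const t * fls_X_intpow e) :: 'k fls mat)"
  then have pq: "p' < n" "q < n" by auto
  obtain i' j' where ij': "i'<n" "j'<n" "p' = \<sigma> i'" "q = \<sigma> j'" using perm_surj_idx[OF p] pq by metis
  have ab: "\<sigma> i \<noteq> \<sigma> j" using ij perm_inj[OF p] by simp
  have e: "(mono_mat n \<sigma> lam * Emat n i j (fls_const t * fls_X_intpow (e - lam i + lam j)) * winv n \<sigma> lam) $$ (p', q)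
     = fls_X_intpow (lam i') * (Emat n i j (fls_const t * fls_X_intpow (e - lam i + lam j)) :: 'k fls mat) $$ (i',j') * fls_X_intpow (- lam j')"
    using conj_entry[OF p Emat_carrier ij'(1,2)] ij' by simp
  show "(mono_mat n \<sigma> lam * Emat n i j (fls_const t * fls_X_intpow (e - lam i + lam j)) * winv n \<sigma> lam) $$ (p', q)
     = (Emat n (\<sigma> i) (\<sigma> j) (fls_const t * fls_X_intpow e) :: 'k fls mat) $$ (p', q)"
  proof (cases "i' = j'")
    case True
    then show ?thesis using e ij' pq ij ab by (simp add: Emat_index X2 shift1_mult)
  next
    case False
    note F = False
    show ?thesis
    proof (cases "(i',j') = (i,j)")
      case True
      have "lam i + (e - lam i + lam j) + - lam j = e" by simp
      then show ?thesis using e ij' pq ij ab True by (simp add: Emat_index shift1_mult)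
    next
      case False
      have "(p',q) \<noteq> (\<sigma> i, \<sigma> j)" "p' \<noteq> q" using False F ij' perm_inj[OF p] by auto
      then show ?thesis using e ij' pq ij ab F False by (auto simp: Emat_index perm_inj[OF p])
    qed
  qed
qed simp_all

lemma root_subgroup_Emat: "root_subgroup n (a,b) = {Emat n a b t | t. True}"
  unfolding root_subgroup_def Emat_def by simp

lemma ev1_Emat:
  assumes ab: "a \<noteq> b"
  shows "ev1_mat (Emat n a b (fls_const t * fls_X_intpow e)) = (Emat n a b t :: 'k::field mat)"
proof (rule eq_matI)
  fix p q assume "p < dim_row (Emat n a b t :: 'k mat)" "q < dim_col (Emat n a b t :: 'k mat)"
  then have pq: "p < n" "q < n" by auto
  show "ev1_mat (Emat n a b (fls_const t * fls_X_intpow e)) $$ (p, q) = (Emat n a b t :: 'k mat) $$ (p, q)"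
    using pq ab by (simp add: ev1_mat_def Emat_index ev1_cX ev1_0 ev1_1)
qed (simp_all add: ev1_mat_def)

lemma root_in_Phi:
  fixes \<sigma> :: "nat \<Rightarrow> nat" and lam :: "nat \<Rightarrow> int"
  assumes p: "\<sigma> permutes {0..<n}" and i: "i<n" and j: "j<n" and ij: "i\<noteq>j" and e0: "e \<le> 0"
    and de: "lam i - lam j + (if j < i then 1 else 0) \<le> e" and ee: "e < 0 \<or> \<sigma> j < \<sigma> i"
  shows "(\<sigma> i, \<sigma> j) \<in> Phi n (G_set n (mono_mat n \<sigma> lam :: 'k::field fls mat))"
proof -
  define a where "a = \<sigma> i"
  define b where "b = \<sigma> j"
  have an: "a < n" and bn: "b < n" using perm_lt[OF p] i j by (auto simp: a_def b_def)
  have ab: "a \<noteq> b" using ij perm_inj[OF p] by (simp add: a_def b_def)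
  have "root_subgroup n (a,b) \<subseteq> G_set n (mono_mat n \<sigma> lam :: 'k fls mat)"
  proof
    fix x :: "'k mat" assume "x \<in> root_subgroup n (a,b)"
    then obtain t where x: "x = Emat n a b t" by (auto simp: root_subgroup_Emat)
    define c :: "'k fls" where "c = fls_const t * fls_X_intpow e"
    define M where "M = Emat n a b c"
    have ev: "ev1_mat M = x" unfolding M_def c_def x using ev1_Emat[OF ab] .
    have mc: "- c = fls_const (-t) * fls_X_intpow e" unfolding c_def by simp
    have Mm: "M \<in> Iwahori_minus n"
      unfolding Iwahori_minus_def
    proof (intro CollectI conjI allI impI)
      show "M \<in> GLn n is_poly_sinv" unfolding M_def
        by (rule Emat_GLn[OF ab bn is_poly_sinv_0 is_poly_sinv_1]) (use e0 in \<open>auto simp: c_def intro: is_poly_sinv_cX is_poly_sinv_uminus\<close>)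
      fix p' q assume "p' < n" "q < n" "p' < q"
      then show "fls_nth (M $$ (p', q)) 0 = 0"
        using ee ab unfolding M_def c_def a_def b_def by (auto simp: Emat_index nth_cX)
    qed
    define m where "m = e - lam i + lam j"
    define g where "g = (Emat n i j (fls_const t * fls_X_intpow m) :: 'k fls mat)"
    have m0: "m \<ge> (if j < i then 1 else 0)" using de unfolding m_def by simp
    have mg: "- (fls_const t * fls_X_intpow m) = (fls_const (-t) * fls_X_intpow m :: 'k fls)" by simp
    have gI: "g \<in> Iwahori n"
      unfolding Iwahori_def
    proof (intro CollectI conjI allI impI)
      show "g \<in> GLn n is_power_series" unfolding g_def
        by (rule Emat_GLn[OF ij j is_power_series_0 is_power_series_1]) (use m0 in \<open>auto split: if_splits intro!: is_power_series_cX is_power_series_uminus\<close>)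
      fix p' q assume "p' < n" "q < n" "q < p'"
      then show "fls_nth (g $$ (p', q)) 0 = 0"
        using m0 ij unfolding g_def by (auto simp: Emat_index nth_cX)
    qed
    have "mono_mat n \<sigma> lam * g * mat_inv n (mono_mat n \<sigma> lam) = M"
      unfolding mat_inv_mono[OF p] g_def M_def c_def a_def b_def m_def
      by (rule conj_eq_Emat[OF p i j ij])
    then have "M \<in> conj_set n (mono_mat n \<sigma> lam) (Iwahori n)"
      unfolding conj_set_def using gI by blast
    then have "M \<in> S_set n (mono_mat n \<sigma> lam)" using Mm by (simp add: S_set_def)
    then show "x \<in> G_set n (mono_mat n \<sigma> lam)" unfolding G_set_def using ev by blast
  qed
  moreover have "(a,b) \<in> roots n" using an bn ab by (simp add: roots_def)
  ultimately show ?thesis unfolding Phi_def a_def b_def by simp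
qed

definition cond :: "nat \<Rightarrow> (nat \<Rightarrow> nat) \<Rightarrow> (nat \<Rightarrow> int) \<Rightarrow> bool" where
  "cond n \<sigma> lam \<longleftrightarrow> (\<forall>i<n. \<forall>j<n. i \<noteq> j \<longrightarrow>
     lam i - lam j + (if j < i then 1 else 0) = (if \<sigma> j < \<sigma> i then 1 else 0))"

lemma not_cond_Phi:
  fixes \<sigma> :: "nat \<Rightarrow> nat" and lam :: "nat \<Rightarrow> int"
  assumes p: "\<sigma> permutes {0..<n}" and nc: "\<not> cond n \<sigma> lam"
  shows "Phi n (G_set n (mono_mat n \<sigma> lam :: 'k::field fls mat)) \<noteq> {}"
proof -
  obtain i j where i: "i<n" and j: "j<n" and ij: "i \<noteq> j"
    and ne: "lam i - lam j + (if j < i then 1 else 0) \<noteq> (if \<sigma> j < \<sigma> i then 1 else 0)"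
    using nc unfolding cond_def by blast
  have sij: "\<sigma> i \<noteq> \<sigma> j" using ij perm_inj[OF p] by simp
  define d where "d = lam i - lam j + (if j < i then 1 else 0)"
  have dji: "lam j - lam i + (if i < j then 1 else 0) = 1 - d" using ij unfolding d_def by auto
  consider "d \<le> -1" | "d \<ge> 2" | "d = 0" | "d = 1" by linarith
  then show ?thesis
  proof cases
    case 1
    then have "(\<sigma> i, \<sigma> j) \<in> Phi n (G_set n (mono_mat n \<sigma> lam :: 'k fls mat))"
      by (intro root_in_Phi[OF p i j ij, of "-1"]) (auto simp: d_def)
    then show ?thesis by blast
  next
    case 2
    then have "(\<sigma> j, \<sigma> i) \<in> Phi n (G_set n (mono_mat n \<sigma> lam :: 'k fls mat))"
      using dji by (intro root_in_Phi[OF p j i ij[symmetric], of "-1"]) auto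
    then show ?thesis by blast
  next
    case 3
    then have "\<sigma> j < \<sigma> i" using ne unfolding d_def by (auto split: if_splits)
    then have "(\<sigma> i, \<sigma> j) \<in> Phi n (G_set n (mono_mat n \<sigma> lam :: 'k fls mat))"
      using 3 by (intro root_in_Phi[OF p i j ij, of 0]) (auto simp: d_def)
    then show ?thesis by blast
  next
    case 4
    then have "\<sigma> i < \<sigma> j" using ne sij unfolding d_def by (auto split: if_splits)
    then have "(\<sigma> j, \<sigma> i) \<in> Phi n (G_set n (mono_mat n \<sigma> lam :: 'k fls mat))"
      using 4 dji by (intro root_in_Phi[OF p j i ij[symmetric], of 0]) auto
    then show ?thesis by blast
  qed
qed

lemma Phi_torus: "Phi n (torus n :: 'k::field mat set) = {}"
proof (rule ccontr)
  assume "Phi n (torus n :: 'k mat set) \<noteq> {}"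
  then obtain a b where ab: "(a,b) \<in> roots n" and sub: "root_subgroup n (a,b) \<subseteq> (torus n :: 'k mat set)"
    unfolding Phi_def by auto
  have abn: "a < n" "b < n" "a \<noteq> b" using ab by (auto simp: roots_def)
  have "Emat n a b (1::'k) \<in> root_subgroup n (a,b)" by (auto simp: root_subgroup_Emat)
  then have "Emat n a b (1::'k) \<in> torus n" using sub by blast
  then have "Emat n a b (1::'k) $$ (a,b) = 0" unfolding torus_def diagonal_mat_def using abn by auto
  then show False using abn by (simp add: Emat_index)
qed

lemma const_of: "is_poly_sinv f \<Longrightarrow> is_power_series f \<Longrightarrow> f = fls_const (fls_nth f 0)"
  unfolding is_poly_sinv_def is_power_series_def
  by (rule fls_eqI) (metis fls_const_nth linorder_neqE_linordered_idom)

lemma ev1_const: "ev1 (fls_const c :: 'k::field fls) = c"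
  using ev1_cX[of c 0] by simp

lemma is_poly_sinv_const: "is_poly_sinv (fls_const c :: 'k::field fls)"
  using is_poly_sinv_cX[of 0 c] by simp
lemma is_power_series_const: "is_power_series (fls_const c :: 'k::field fls)"
  using is_power_series_cX[of 0 c] by simp

lemma G_torus:
  assumes "S_set n w = Iwahori_minus n \<inter> Iwahori n"
  shows "G_set n w = (torus n :: 'k::field mat set)"
proof
  show "G_set n w \<subseteq> torus n"
  proof
    fix A assume "A \<in> G_set n w"
    then obtain M where M: "M \<in> Iwahori_minus n" "M \<in> Iwahori n" and A: "A = ev1_mat M"
      using assms unfolding G_set_def by auto
    have Mc: "M \<in> carrier_mat n n" using M(1) unfolding Iwahori_minus_def GLn_def by auto
    obtain B where B: "B \<in> carrier_mat n n" "M * B = 1\<^sub>m n"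
      using M(1) unfolding Iwahori_minus_def GLn_def by auto
    have ent: "M $$ (i,j) = fls_const (fls_nth (M $$ (i,j)) 0)" if "i<n" "j<n" for i j
      using M that by (intro const_of) (auto simp: Iwahori_minus_def Iwahori_def GLn_def entries_in_def)
    have off: "M $$ (i,j) = 0" if "i<n" "j<n" "i \<noteq> j" for i j
    proof -
      have "fls_nth (M $$ (i,j)) 0 = 0"
        using M that by (cases "i < j") (auto simp: Iwahori_minus_def Iwahori_def)
      then show ?thesis using ent[OF that(1,2)] by simp
    qed
    have diag: "M $$ (i,i) \<noteq> 0" if "i<n" for i
    proof
      assume z: "M $$ (i,i) = 0"
      have "(M * B) $$ (i,i) = (\<Sum>k\<in>{0..<n}. M $$ (i,k) * B $$ (k,i))"
        using Mc B(1) that by (simp add: index_mult_mat scalar_prod_def)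
      also have "\<dots> = 0" by (rule sum.neutral) (use z off that in \<open>metis atLeastLessThan_iff mult_zero_left\<close>)
      finally have "(M * B) $$ (i,i) = 0" .
      moreover have "(M * B) $$ (i,i) = 1" using B(2) that by simp
      ultimately show False by simp
    qed
    have Ac: "A \<in> carrier_mat n n" using Mc A by (simp add: ev1_mat_def)
    have Aij: "A $$ (i,j) = fls_nth (M $$ (i,j)) 0" if "i<n" "j<n" for i j
      using A Mc that ent[OF that] by (simp add: ev1_mat_def) (metis ev1_const)
    show "A \<in> torus n"
      unfolding torus_def diagonal_mat_def
    proof (intro CollectI conjI allI impI Ac)
      fix i j assume "i < dim_row A" "j < dim_col A" "i \<noteq> j"
      then show "A $$ (i,j) = 0" using Ac Aij off by auto
    next
      fix i assume i: "i < n"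
      show "A $$ (i,i) \<noteq> 0" using Aij[OF i i] diag[OF i] ent[OF i i] by auto
    qed
  qed
next
  show "torus n \<subseteq> G_set n w"
  proof
    fix A :: "'k mat" assume A: "A \<in> torus n"
    have Ac: "A \<in> carrier_mat n n" and Ad: "\<And>i j. i<n \<Longrightarrow> j<n \<Longrightarrow> i \<noteq> j \<Longrightarrow> A $$ (i,j) = 0"
      and Anz: "\<And>i. i<n \<Longrightarrow> A $$ (i,i) \<noteq> 0"
      using A unfolding torus_def diagonal_mat_def by auto
    define M :: "'k fls mat" where "M = mat n n (\<lambda>(i,j). fls_const (A $$ (i,j)))"
    define B :: "'k fls mat" where "B = mat n n (\<lambda>(i,j). fls_const (if i = j then inverse (A $$ (i,i)) else 0))"
    have MB: "M * B = 1\<^sub>m n" "B * M = 1\<^sub>m n"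
    proof -
      show "M * B = 1\<^sub>m n"
      proof (rule eq_matI)
        fix i j assume "i < dim_row (1\<^sub>m n :: 'k fls mat)" "j < dim_col (1\<^sub>m n :: 'k fls mat)"
        then have ij: "i<n" "j<n" by auto
        have "(M * B) $$ (i,j) = (\<Sum>k\<in>{0..<n}. M $$ (i,k) * B $$ (k,j))"
          using ij by (simp add: M_def B_def index_mult_mat scalar_prod_def)
        also have "\<dots> = (\<Sum>k\<in>{0..<n}. if k = i then fls_const (A $$ (i,i)) * B $$ (i,j) else 0)"
          by (rule sum.cong) (use ij Ad in \<open>auto simp: M_def\<close>)
        also have "\<dots> = (1\<^sub>m n :: 'k fls mat) $$ (i,j)"
          using ij Anz[OF ij(1)] by (auto simp: B_def)
        finally show "(M * B) $$ (i,j) = (1\<^sub>m n :: 'k fls mat) $$ (i,j)" .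
      qed (simp_all add: M_def B_def)
      show "B * M = 1\<^sub>m n"
      proof (rule eq_matI)
        fix i j assume "i < dim_row (1\<^sub>m n :: 'k fls mat)" "j < dim_col (1\<^sub>m n :: 'k fls mat)"
        then have ij: "i<n" "j<n" by auto
        have "(B * M) $$ (i,j) = (\<Sum>k\<in>{0..<n}. B $$ (i,k) * M $$ (k,j))"
          using ij by (simp add: M_def B_def index_mult_mat scalar_prod_def)
        also have "\<dots> = (\<Sum>k\<in>{0..<n}. if k = i then B $$ (i,i) * M $$ (i,j) else 0)"
          by (rule sum.cong) (use ij in \<open>auto simp: B_def\<close>)
        also have "\<dots> = (1\<^sub>m n :: 'k fls mat) $$ (i,j)"
          using ij Anz[OF ij(1)] Ad[OF ij] by (auto simp: M_def B_def)
        finally show "(B * M) $$ (i,j) = (1\<^sub>m n :: 'k fls mat) $$ (i,j)" .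
      qed (simp_all add: M_def B_def)
    qed
    have Mc: "M \<in> carrier_mat n n" "B \<in> carrier_mat n n" by (simp_all add: M_def B_def)
    have eM: "entries_in n P M" "entries_in n P B" if "\<And>c. P (fls_const c)" for P :: "'k fls \<Rightarrow> bool"
      using that by (auto simp: entries_in_def M_def B_def)
    have offM: "fls_nth (M $$ (i,j)) 0 = 0" if "i<n" "j<n" "i\<noteq>j" for i j
      using Ad[OF that] that by (simp add: M_def)
    have "M \<in> Iwahori_minus n"
      unfolding Iwahori_minus_def GLn_def
      using Mc MB eM[of is_poly_sinv] offM is_poly_sinv_const by auto
    moreover have "M \<in> Iwahori n"
      unfolding Iwahori_def GLn_def
      using Mc MB eM[of is_power_series] offM is_power_series_const by auto
    moreover have "ev1_mat M = A"
      by (rule eq_matI) (use Ac in \<open>auto simp: ev1_mat_def M_def ev1_const\<close>)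
    ultimately show "A \<in> G_set n w" unfolding G_set_def using assms by blast
  qed
qed

definition vb :: "int \<Rightarrow> 'k::zero fls \<Rightarrow> bool" where
  "vb k f \<longleftrightarrow> (\<forall>m<k. fls_nth f m = 0)"

definition inI :: "nat \<Rightarrow> 'k::field fls mat \<Rightarrow> bool" where
  "inI n g \<longleftrightarrow> g \<in> carrier_mat n n \<and> (\<forall>i<n. \<forall>j<n. vb (if j < i then 1 else 0) (g $$ (i,j)))"

lemma nth0_mult:
  assumes f: "is_power_series f" and g: "is_power_series (g :: 'k::field fls)"
  shows "fls_nth (f * g) 0 = fls_nth f 0 * fls_nth g 0"
proof -
  have df: "fls_subdegree f \<ge> 0" using f unfolding is_power_series_def by (intro fls_subdegree_ge0I) auto
  have dg: "fls_subdegree g \<ge> 0" using g unfolding is_power_series_def by (intro fls_subdegree_ge0I) auto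
  have "f * g = fps_to_fls (fls_regpart f * fls_regpart g)"
    using df dg by (simp add: fls_times_fps_to_fls)
  then have "fls_nth (f * g) 0 = (fls_regpart f * fls_regpart g) $ 0" by simp
  also have "\<dots> = fls_nth f 0 * fls_nth g 0" by simp
  finally show ?thesis .
qed

lemma vb_ps: "vb k f \<Longrightarrow> k \<ge> 0 \<Longrightarrow> is_power_series f"
  unfolding vb_def is_power_series_def by auto

lemma Iw_inI:
  assumes g: "g \<in> Iwahori n" shows "inI n g"
  unfolding inI_def
proof (intro conjI allI impI)
  show "g \<in> carrier_mat n n" using g unfolding Iwahori_def GLn_def by auto
  fix i j assume ij: "i < n" "j < n"
  have ps: "is_power_series (g $$ (i,j))" using g ij unfolding Iwahori_def GLn_def entries_in_def by auto
  have z: "j < i \<Longrightarrow> fls_nth (g $$ (i,j)) 0 = 0" using g ij unfolding Iwahori_def by auto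
  show "vb (if j < i then 1 else 0) (g $$ (i,j))"
    unfolding vb_def
  proof (intro allI impI)
    fix m :: int assume m: "m < (if j < i then 1 else 0)"
    show "fls_nth (g $$ (i,j)) m = 0"
    proof (cases "m < 0")
      case True then show ?thesis using ps unfolding is_power_series_def by auto
    next
      case False then have "m = 0" "j < i" using m by (auto split: if_splits)
      then show ?thesis using z by simp
    qed
  qed
qed

lemma inI_ps: "inI n h \<Longrightarrow> i<n \<Longrightarrow> j<n \<Longrightarrow> is_power_series (h $$ (i,j))"
  unfolding inI_def by (metis vb_ps order_refl zero_le_one)

lemma inI_lower: "inI n h \<Longrightarrow> i<n \<Longrightarrow> j<n \<Longrightarrow> j < i \<Longrightarrow> fls_nth (h $$ (i,j)) 0 = 0"
  unfolding inI_def vb_def by auto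

lemma inI_Iw:
  assumes "inI n g" "inI n B" "g * B = 1\<^sub>m n" "B * g = 1\<^sub>m n"
  shows "g \<in> Iwahori n"
proof -
  have "g \<in> carrier_mat n n" "B \<in> carrier_mat n n" using assms unfolding inI_def by auto
  then show ?thesis
    unfolding Iwahori_def GLn_def entries_in_def
    using assms inI_ps[OF assms(1)] inI_ps[OF assms(2)] inI_lower[OF assms(1)] by blast
qed

lemma Iw_inv:
  assumes g: "g \<in> Iwahori n"
  shows "\<exists>B. inI n B \<and> g * B = 1\<^sub>m n \<and> B * g = 1\<^sub>m n"
proof -
  obtain B where Bc: "B \<in> carrier_mat n n" and Be: "entries_in n is_power_series B"
    and gB: "g * B = 1\<^sub>m n" and Bg: "B * g = 1\<^sub>m n"
    using g unfolding Iwahori_def GLn_def by auto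
  have gc: "g \<in> carrier_mat n n" using g unfolding Iwahori_def GLn_def by auto
  have gI: "inI n g" using Iw_inI[OF g] .
  define b where "b i k = fls_nth (B $$ (i,k)) 0" for i k
  define gg where "gg k j = fls_nth (g $$ (k,j)) 0" for k j
  have S: "(\<Sum>k\<in>{0..<n}. b i k * gg k j) = (if i = j then 1 else 0)" if ij: "i<n" "j<n" for i j
  proof -
    have "(B * g) $$ (i,j) = (\<Sum>k\<in>{0..<n}. B $$ (i,k) * g $$ (k,j))"
      using Bc gc ij by (simp add: index_mult_mat scalar_prod_def)
    then have "fls_nth ((B * g) $$ (i,j)) 0 = (\<Sum>k\<in>{0..<n}. fls_nth (B $$ (i,k) * g $$ (k,j)) 0)"
      by (simp add: fls_nth_sum)
    also have "\<dots> = (\<Sum>k\<in>{0..<n}. b i k * gg k j)"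
    proof (rule sum.cong)
      fix k assume "k \<in> {0..<n}"
      then have k: "k < n" by simp
      have "is_power_series (B $$ (i,k))" using Be ij k unfolding entries_in_def by auto
      moreover have "is_power_series (g $$ (k,j))" using inI_ps[OF gI k ij(2)] .
      ultimately show "fls_nth (B $$ (i,k) * g $$ (k,j)) 0 = b i k * gg k j"
        unfolding b_def gg_def by (rule nth0_mult)
    qed simp
    finally show ?thesis using Bg ij by (cases "i = j") auto
  qed
  have lowg: "gg k j = 0" if "k<n" "j<n" "j<k" for k j
    unfolding gg_def using inI_lower[OF gI that] .
  have claim: "\<forall>i<n. j < i \<longrightarrow> b i j = 0" if "j < n" for j
    using that
  proof (induction j rule: less_induct)
    case (less j)
    have key: "(\<Sum>k\<in>{0..<n}. b i k * gg k j) = b i j * gg j j" if i: "i<n" "j \<le> i" for i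
    proof -
      have "(\<Sum>k\<in>{0..<n}. b i k * gg k j) = b i j * gg j j + (\<Sum>k\<in>{0..<n} - {j}. b i k * gg k j)"
        using less.prems by (simp add: sum.remove)
      also have "(\<Sum>k\<in>{0..<n} - {j}. b i k * gg k j) = 0"
      proof (rule sum.neutral, intro ballI)
        fix k assume k: "k \<in> {0..<n} - {j}"
        show "b i k * gg k j = 0"
        proof (cases "k < j")
          case True then show ?thesis using less.IH[of k] k i less.prems by auto
        next
          case False then show ?thesis using lowg[of k j] k less.prems by auto
        qed
      qed
      finally show ?thesis by simp
    qed
    have "b j j * gg j j = 1" using key[OF less.prems order_refl] S[OF less.prems less.prems] by simp
    then have nz: "gg j j \<noteq> 0" by auto
    show ?case
    proof (intro allI impI)
      fix i assume i: "i < n" "j < i"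
      have "b i j * gg j j = 0" using key[of i] S[of i j] i less.prems by simp
      then show "b i j = 0" using nz by simp
    qed
  qed
  have "inI n B"
    unfolding inI_def vb_def
  proof (intro conjI allI impI Bc)
    fix i j :: nat and m :: int assume ij: "i < n" "j < n" and m: "m < (if j < i then 1 else 0)"
    have ps: "is_power_series (B $$ (i,j))" using Be ij unfolding entries_in_def by auto
    show "fls_nth (B $$ (i,j)) m = 0"
    proof (cases "m < 0")
      case True then show ?thesis using ps unfolding is_power_series_def by auto
    next
      case False then have "m = 0" "j < i" using m by (auto split: if_splits)
      then show ?thesis using claim[OF ij(2)] ij unfolding b_def by auto
    qed
  qed
  then show ?thesis using gB Bg by blast
qed

lemma nth_XfX: "fls_nth (fls_X_intpow a * f * fls_X_intpow b :: 'k::field fls) k = fls_nth f (k - a - b)"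
  by (simp add: shift1_mult algebra_simps)

lemma conj_inI:
  fixes \<sigma> :: "nat \<Rightarrow> nat" and lam :: "nat \<Rightarrow> int"
  assumes p: "\<sigma> permutes {0..<n}" and c: "cond n \<sigma> lam" and g: "inI n (g :: 'k::field fls mat)"
  shows "inI n (mono_mat n \<sigma> lam * g * winv n \<sigma> lam)"
  unfolding inI_def
proof (intro conjI allI impI)
  have gc: "g \<in> carrier_mat n n" using g unfolding inI_def by auto
  show "mono_mat n \<sigma> lam * g * winv n \<sigma> lam \<in> carrier_mat n n"
    using mult_carrier_mat[OF mult_carrier_mat[OF mono_carrier gc] winv_carrier] .
  fix p' q assume pq: "p' < n" "q < n"
  obtain i j where ij: "i<n" "j<n" "p' = \<sigma> i" "q = \<sigma> j" using perm_surj_idx[OF p] pq by metis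
  have e: "(mono_mat n \<sigma> lam * g * winv n \<sigma> lam) $$ (p', q) = fls_X_intpow (lam i) * g $$ (i,j) * fls_X_intpow (- lam j)"
    using conj_entry[OF p gc ij(1,2)] ij by simp
  have gv: "vb (if j < i then 1 else 0) (g $$ (i,j))" using g ij unfolding inI_def by auto
  show "vb (if q < p' then 1 else 0) ((mono_mat n \<sigma> lam * g * winv n \<sigma> lam) $$ (p', q))"
    unfolding e vb_def nth_XfX
  proof (intro allI impI)
    fix m :: int assume m: "m < (if q < p' then 1 else 0)"
    show "fls_nth (g $$ (i,j)) (m - lam i - - lam j) = 0"
    proof (cases "i = j")
      case True then show ?thesis using gv m ij unfolding vb_def by auto
    next
      case False
      then have "lam i - lam j + (if j < i then 1 else 0) = (if \<sigma> j < \<sigma> i then 1 else 0)"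
        using c ij unfolding cond_def by auto
      then have "m - lam i - - lam j < (if j < i then 1 else 0)" using m ij by auto
      then show ?thesis using gv unfolding vb_def by auto
    qed
  qed
qed

lemma cond_inv:
  fixes \<sigma> :: "nat \<Rightarrow> nat" and lam :: "nat \<Rightarrow> int"
  assumes p: "\<sigma> permutes {0..<n}" and c: "cond n \<sigma> lam"
  shows "cond n (inv_into UNIV \<sigma>) (\<lambda>q. - lam (inv_into UNIV \<sigma> q))"
  unfolding cond_def
proof (intro allI impI)
  fix a b assume ab: "a < n" "b < n" "a \<noteq> b"
  obtain i j where ij: "i<n" "j<n" "a = \<sigma> i" "b = \<sigma> j" using perm_surj_idx[OF p] ab by metis
  have inv: "inv_into UNIV \<sigma> a = i" "inv_into UNIV \<sigma> b = j" using p ij by (simp_all add: permutes_inverses)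
  have ne: "i \<noteq> j" using ab ij by auto
  have "lam j - lam i + (if i < j then 1 else 0) = (if \<sigma> i < \<sigma> j then 1 else 0)"
    using c ij ne unfolding cond_def by auto
  then show "- lam (inv_into UNIV \<sigma> a) - - lam (inv_into UNIV \<sigma> b) + (if b < a then 1 else 0) =
         (if inv_into UNIV \<sigma> b < inv_into UNIV \<sigma> a then 1 else 0)"
    unfolding inv using ne ab ij by (auto split: if_splits)
qed

lemma cancel_mat:
  assumes "v * w = 1\<^sub>m n" "v \<in> carrier_mat n n" "w \<in> carrier_mat n n" "X \<in> carrier_mat n m"
  shows "v * (w * X) = (X :: 'a::comm_ring_1 mat)"
proof -
  have "v * (w * X) = (v * w) * X" using assoc_mult_mat[OF assms(2,3,4)] by simp
  also have "\<dots> = X" using assms(1) left_mult_one_mat[OF assms(4)] by simp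
  finally show ?thesis .
qed

lemma conj_prod:
  fixes w :: "'a::comm_ring_1 mat"
  assumes w: "w \<in> carrier_mat n n" and v: "v \<in> carrier_mat n n" and A: "A \<in> carrier_mat n n"
    and C: "C \<in> carrier_mat n n" and vw: "v * w = 1\<^sub>m n"
  shows "(w * A * v) * (w * C * v) = w * (A * C) * v"
proof -
  have wA: "w * A \<in> carrier_mat n n" and wC: "w * C \<in> carrier_mat n n" and Cv: "C * v \<in> carrier_mat n n"
    and AC: "A * C \<in> carrier_mat n n" and wCv: "w * C * v \<in> carrier_mat n n"
    using w v A C by (auto intro: mult_carrier_mat)
  have cv: "v * (w * (C * v)) = C * v" by (rule cancel_mat[OF vw v w Cv])
  have "(w * A * v) * (w * C * v) = (w * A) * (v * (w * C * v))" by (rule assoc_mult_mat[OF wA v wCv])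
  also have "\<dots> = (w * A) * (v * (w * (C * v)))" using assoc_mult_mat[OF w C v] by simp
  also have "\<dots> = (w * A) * (C * v)" using cv by simp
  also have "\<dots> = w * (A * (C * v))" by (rule assoc_mult_mat[OF w A Cv])
  also have "\<dots> = w * ((A * C) * v)" using assoc_mult_mat[OF A C v] by simp
  also have "\<dots> = w * (A * C) * v" by (rule assoc_mult_mat[OF w AC v, symmetric])
  finally show ?thesis .
qed

lemma conj_cancel:
  fixes w :: "'a::comm_ring_1 mat"
  assumes w: "w \<in> carrier_mat n n" and v: "v \<in> carrier_mat n n" and h: "h \<in> carrier_mat n n"
    and wv: "w * v = 1\<^sub>m n"
  shows "w * (v * h * w) * v = h"
proof -
  have vh: "v * h \<in> carrier_mat n n" and vhw: "v * h * w \<in> carrier_mat n n"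
    using w v h by (auto intro: mult_carrier_mat)
  have "w * (v * h * w) * v = w * ((v * h * w) * v)" by (rule assoc_mult_mat[OF w vhw v])
  also have "(v * h * w) * v = (v * h) * (w * v)" by (rule assoc_mult_mat[OF vh w v])
  also have "(v * h) * (w * v) = v * h" using wv right_mult_one_mat[OF vh] by simp
  also have "w * (v * h) = (w * v) * h" by (rule assoc_mult_mat[OF w v h, symmetric])
  also have "\<dots> = h" using wv left_mult_one_mat[OF h] by simp
  finally show ?thesis .
qed

lemma conj_Iw:
  fixes \<sigma> :: "nat \<Rightarrow> nat" and lam :: "nat \<Rightarrow> int"
  assumes p: "\<sigma> permutes {0..<n}" and c: "cond n \<sigma> lam" and g: "g \<in> Iwahori n"
  shows "mono_mat n \<sigma> lam * g * winv n \<sigma> lam \<in> (Iwahori n :: 'k::field fls mat set)"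
proof -
  obtain B where B: "inI n B" "g * B = 1\<^sub>m n" "B * g = 1\<^sub>m n" using Iw_inv[OF g] by blast
  have gI: "inI n g" using Iw_inI[OF g] .
  have gc: "g \<in> carrier_mat n n" and Bc: "B \<in> carrier_mat n n" using gI B unfolding inI_def by auto
  have vw: "winv n \<sigma> lam * mono_mat n \<sigma> lam = (1\<^sub>m n :: 'k fls mat)" by (rule winv_w[OF p])
  have wv: "mono_mat n \<sigma> lam * winv n \<sigma> lam = (1\<^sub>m n :: 'k fls mat)" by (rule w_winv[OF p])
  have one: "mono_mat n \<sigma> lam * 1\<^sub>m n * winv n \<sigma> lam = (1\<^sub>m n :: 'k fls mat)" using wv by simp
  show ?thesis
  proof (rule inI_Iw[OF conj_inI[OF p c gI] conj_inI[OF p c B(1)]])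
    show "mono_mat n \<sigma> lam * g * winv n \<sigma> lam * (mono_mat n \<sigma> lam * B * winv n \<sigma> lam) = 1\<^sub>m n"
      unfolding conj_prod[OF mono_carrier winv_carrier gc Bc vw] B(2) using one .
    show "mono_mat n \<sigma> lam * B * winv n \<sigma> lam * (mono_mat n \<sigma> lam * g * winv n \<sigma> lam) = 1\<^sub>m n"
      unfolding conj_prod[OF mono_carrier winv_carrier Bc gc vw] B(3) using one .
  qed
qed

lemma cond_Omega:
  fixes \<sigma> :: "nat \<Rightarrow> nat" and lam :: "nat \<Rightarrow> int"
  assumes p: "\<sigma> permutes {0..<n}" and c: "cond n \<sigma> lam"
  shows "conj_set n (mono_mat n \<sigma> lam) (Iwahori n) = (Iwahori n :: 'k::field fls mat set)"
  unfolding conj_set_def mat_inv_mono[OF p]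
proof
  show "(\<lambda>g. mono_mat n \<sigma> lam * g * winv n \<sigma> lam) ` Iwahori n \<subseteq> (Iwahori n :: 'k fls mat set)"
    using conj_Iw[OF p c] by blast
  show "(Iwahori n :: 'k fls mat set) \<subseteq> (\<lambda>g. mono_mat n \<sigma> lam * g * winv n \<sigma> lam) ` Iwahori n"
  proof
    fix h :: "'k fls mat" assume h: "h \<in> Iwahori n"
    have hc: "h \<in> carrier_mat n n" using h unfolding Iwahori_def GLn_def by auto
    have pi: "inv_into UNIV \<sigma> permutes {0..<n}" using p by (simp add: permutes_inv)
    have "mono_mat n (inv_into UNIV \<sigma>) (\<lambda>q. - lam (inv_into UNIV \<sigma> q)) * h
          * winv n (inv_into UNIV \<sigma>) (\<lambda>q. - lam (inv_into UNIV \<sigma> q)) \<in> Iwahori n"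
      by (rule conj_Iw[OF pi cond_inv[OF p c] h])
    then have gI: "winv n \<sigma> lam * h * mono_mat n \<sigma> lam \<in> Iwahori n"
      unfolding winv_winv[OF p] by (simp add: winv_def)
    have vw: "winv n \<sigma> lam * mono_mat n \<sigma> lam = (1\<^sub>m n :: 'k fls mat)" by (rule winv_w[OF p])
    have wv: "mono_mat n \<sigma> lam * winv n \<sigma> lam = (1\<^sub>m n :: 'k fls mat)" by (rule w_winv[OF p])
    have "mono_mat n \<sigma> lam * (winv n \<sigma> lam * h * mono_mat n \<sigma> lam) * winv n \<sigma> lam = h"
      by (rule conj_cancel[OF mono_carrier winv_carrier hc wv])
    then show "h \<in> (\<lambda>g. mono_mat n \<sigma> lam * g * winv n \<sigma> lam) ` Iwahori n"
      using gI by (metis image_eqI)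
  qed
qed

theorem lemma8p4:
  fixes n :: nat and w :: "'k::{field,finite} fls mat"
  assumes "w \<in> affW n"
  shows "(Phi n (G_set n w) = {} \<longleftrightarrow> w \<in> Omega n) \<and>
         (w \<in> Omega n \<longrightarrow> G_set n w = torus n)"
proof -
  obtain \<sigma> lam where w: "w = mono_mat n \<sigma> lam" and p: "\<sigma> permutes {0..<n}"
    using assms unfolding affW_def by blast
  have OG: "G_set n w = torus n" if "w \<in> Omega n"
  proof -
    have "conj_set n w (Iwahori n) = Iwahori n" using that unfolding Omega_def by blast
    then have "S_set n w = Iwahori_minus n \<inter> Iwahori n" unfolding S_set_def by simp
    then show ?thesis by (rule G_torus)
  qed
  have PO: "w \<in> Omega n" if "Phi n (G_set n w) = {}"
  proof -
    have "cond n \<sigma> lam" using not_cond_Phi[OF p, where 'k='k] that w by blast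
    then have "conj_set n w (Iwahori n) = Iwahori n" using cond_Omega[OF p] w by blast
    then show ?thesis using assms unfolding Omega_def by blast
  qed
  show ?thesis using OG PO Phi_torus by metis
qed

end
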